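(* Let $G\le\mathrm{O}(d)$ be finite and suppose $n>\chi(G)\cdot(d-1)$. Then for generic $(z_1,\ldots,z_n)\in(\mathbb{R}^d)^n$, the max filter bank $\Phi:\mathbb{R}^d/G\to\mathbb{R}^n$, $\Phi([x])=(\langle\!\langle[z_i],[x]\rangle\!\rangle)_{i=1}^n$, is bilipschitz, i.e. there exist $0<a\le b<\infty$ with $a\,d([x],[y])\le\|\Phi([x])-\Phi([y])\|\le b\,d([x],[y])$ for all $x,y\in\mathbb{R}^d$.
   Context: For $x\in\mathbb{R}^d$, $[x]:=\{gx:g\in G\}$; $d([x],[y]):=\min_{p\in[x],q\in[y]}\|p-q\|$; $\langle\!\langle[x],[y]\rangle\!\rangle:=\max_{p\in[x],q\in[y]}\langle p,q\rangle$. The open Voronoi cell $V_x$ is the set of $y$ such that $x$ is the unique maximizer of $\langle p,y\rangle$ over $p\in[x]$. $P(G):=\{x:\mathrm{stab}_G(x)=\{\mathrm{id}\}\}$, $S(x,y):=\{q\in[y]:V_q\cap V_x\ne\varnothing\}$, and the Voronoi characteristic is $\chi(G):=\max_{x,y\in P(G)}|S(x,y)|$. "Generic" means the property holds for all tuples outside a proper algebraic (hence Lebesgue-null, lower-dimensional) subset of $(\mathbb{R}^d)^n$. *)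

theory Defs
  imports "HOL-Analysis.Analysis"
begin

definition finite_orth_group :: "(real^'d^'d) set \<Rightarrow> bool" where
  "finite_orth_group G \<longleftrightarrow> finite G \<and> mat 1 \<in> G
     \<and> (\<forall>A\<in>G. \<forall>B\<in>G. A ** B \<in> G)
     \<and> (\<forall>A\<in>G. transpose A \<in> G)
     \<and> (\<forall>A\<in>G. orthogonal_matrix A)"

definition orbit :: "(real^'d^'d) set \<Rightarrow> real^'d \<Rightarrow> (real^'d) set" where
  "orbit G x = (\<lambda>A. A *v x) ` G"

definition qdist :: "(real^'d^'d) set \<Rightarrow> real^'d \<Rightarrow> real^'d \<Rightarrow> real" where
  "qdist G x y = Min {norm (p - q) | p q. p \<in> orbit G x \<and> q \<in> orbit G y}"

definition maxpair :: "(real^'d^'d) set \<Rightarrow> real^'d \<Rightarrow> real^'d \<Rightarrow> real" where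
  "maxpair G x y = Max {p \<bullet> q | p q. p \<in> orbit G x \<and> q \<in> orbit G y}"

definition voronoi :: "(real^'d^'d) set \<Rightarrow> real^'d \<Rightarrow> (real^'d) set" where
  "voronoi G x = {y. \<forall>p\<in>orbit G x. p \<noteq> x \<longrightarrow> p \<bullet> y < x \<bullet> y}"

definition principal :: "(real^'d^'d) set \<Rightarrow> (real^'d) set" where
  "principal G = {x. {A\<in>G. A *v x = x} = {mat 1}}"

definition Sset :: "(real^'d^'d) set \<Rightarrow> real^'d \<Rightarrow> real^'d \<Rightarrow> (real^'d) set" where
  "Sset G x y = {q\<in>orbit G y. voronoi G q \<inter> voronoi G x \<noteq> {}}"

definition voronoi_char :: "(real^'d^'d) set \<Rightarrow> nat" where
  "voronoi_char G = Max {card (Sset G x y) | x y. x \<in> principal G \<and> y \<in> principal G}"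

definition max_filter :: "(real^'d^'d) set \<Rightarrow> real^'d^'m \<Rightarrow> real^'d \<Rightarrow> real^'m" where
  "max_filter G z x = (\<chi> i. maxpair G (z $ i) x)"

definition bilipschitz_mf :: "(real^'d^'d) set \<Rightarrow> real^'d^'m \<Rightarrow> bool" where
  "bilipschitz_mf G z \<longleftrightarrow> (\<exists>a b. 0 < a \<and> a \<le> b \<and>
     (\<forall>x y. a * qdist G x y \<le> norm (max_filter G z x - max_filter G z y)
          \<and> norm (max_filter G z x - max_filter G z y) \<le> b * qdist G x y))"

text \<open>Generic: holds outside the zero set of a nonzero real polynomial function,
  i.e. outside a proper algebraic subset.\<close>
definition generic :: "('a::real_normed_vector \<Rightarrow> bool) \<Rightarrow> bool" where
  "generic P \<longleftrightarrow> (\<exists>p. real_polynomial_function p \<and> (\<exists>z. p z \<noteq> 0)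
                     \<and> (\<forall>z. p z \<noteq> 0 \<longrightarrow> P z))"

end

theory Submission
  imports Defs
begin


lemma fog: assumes "finite_orth_group G"
  shows "finite G" "mat 1 \<in> G" "\<And>A B. A\<in>G \<Longrightarrow> B\<in>G \<Longrightarrow> A ** B \<in> G"
    "\<And>A. A\<in>G \<Longrightarrow> transpose A \<in> G" "\<And>A. A\<in>G \<Longrightarrow> orthogonal_matrix A"
  using assms unfolding finite_orth_group_def by auto

lemma orth_tt: "orthogonal_matrix (A::real^'n^'n) \<Longrightarrow> transpose A ** A = mat 1 \<and> A ** transpose A = mat 1"
  by (simp add: orthogonal_matrix_def)

lemma transp_inner: "((A::real^'n^'n) *v x) \<bullet> y = x \<bullet> (transpose A *v y)"
  by (metis dot_lmul_matrix vector_transpose_matrix)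

lemma orth_inner: "orthogonal_matrix (A::real^'n^'n) \<Longrightarrow> (A *v x) \<bullet> (A *v y) = x \<bullet> y"
  by (simp add: transp_inner matrix_vector_mul_assoc orth_tt)

lemma orth_norm: "orthogonal_matrix (A::real^'n^'n) \<Longrightarrow> norm (A *v x) = norm x"
  by (simp add: norm_eq_sqrt_inner orth_inner)

lemma orbit_self: "finite_orth_group G \<Longrightarrow> x \<in> orbit G x"
  unfolding orbit_def using fog(2) by force

lemma orbit_finite: "finite_orth_group G \<Longrightarrow> finite (orbit G x)"
  unfolding orbit_def using fog(1) by blast

lemma orbit_mem: "finite_orth_group G \<Longrightarrow> A \<in> G \<Longrightarrow> p \<in> orbit G z \<Longrightarrow> A *v p \<in> orbit G z"
proof -
  assume G: "finite_orth_group G" and A: "A \<in> G" and p: "p \<in> orbit G z"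
  then obtain g where g: "g \<in> G" "p = g *v z" unfolding orbit_def by auto
  have "A *v p = (A ** g) *v z" by (simp add: g matrix_vector_mul_assoc)
  moreover have "A ** g \<in> G" using fog(3)[OF G A g(1)] .
  ultimately show ?thesis unfolding orbit_def by blast
qed

lemma orbit_eq: assumes G: "finite_orth_group G" and p: "p \<in> orbit G z"
  shows "orbit G p = orbit G z"
proof -
  obtain g where g: "g \<in> G" "p = g *v z" using p unfolding orbit_def by auto
  show ?thesis
  proof
    show "orbit G p \<subseteq> orbit G z"
    proof
      fix q assume "q \<in> orbit G p"
      then obtain h where h: "h \<in> G" "q = h *v p" unfolding orbit_def by auto
      show "q \<in> orbit G z" using orbit_mem[OF G h(1) p] h(2) by simp
    qed
    show "orbit G z \<subseteq> orbit G p"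
    proof
      fix q assume "q \<in> orbit G z"
      then obtain h where h: "h \<in> G" "q = h *v z" unfolding orbit_def by auto
      have tg: "transpose g ** g = mat 1" using orth_tt[OF fog(5)[OF G g(1)]] by simp
      have "(h ** transpose g) *v p = h *v ((transpose g ** g) *v z)"
        by (simp add: g(2) matrix_vector_mul_assoc matrix_mul_assoc)
      then have "q = (h ** transpose g) *v p" using tg h(2) by simp
      moreover have "h ** transpose g \<in> G" using fog(3)[OF G h(1) fog(4)[OF G g(1)]] .
      ultimately show "q \<in> orbit G p" unfolding orbit_def by blast
    qed
  qed
qed

lemma pairset: assumes G: "finite_orth_group G"
  shows "{p \<bullet> q | p q. p \<in> orbit G z \<and> q \<in> orbit G y} = (\<lambda>p. p \<bullet> y) ` orbit G z"
proof
  show "{p \<bullet> q | p q. p \<in> orbit G z \<and> q \<in> orbit G y} \<subseteq> (\<lambda>p. p \<bullet> y) ` orbit G z"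
  proof
    fix t assume "t \<in> {p \<bullet> q | p q. p \<in> orbit G z \<and> q \<in> orbit G y}"
    then obtain p h where p: "p \<in> orbit G z" and h: "h \<in> G" and t: "t = p \<bullet> (h *v y)"
      unfolding orbit_def by blast
    have "t = (transpose h *v p) \<bullet> y" using t by (metis transp_inner transpose_transpose)
    moreover have "transpose h *v p \<in> orbit G z" using orbit_mem[OF G fog(4)[OF G h] p] .
    ultimately show "t \<in> (\<lambda>p. p \<bullet> y) ` orbit G z" by blast
  qed
  show "(\<lambda>p. p \<bullet> y) ` orbit G z \<subseteq> {p \<bullet> q | p q. p \<in> orbit G z \<and> q \<in> orbit G y}"
    using orbit_self[OF G] by blast
qed

lemma maxpair_alt: assumes G: "finite_orth_group G" shows "maxpair G z y = Max ((\<lambda>p. p \<bullet> y) ` orbit G z)"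
  unfolding maxpair_def pairset[OF G] ..

lemma swap_sub: fixes A B :: "(real^'n) set"
  shows "{p \<bullet> q | p q. p \<in> A \<and> q \<in> B} \<subseteq> {q \<bullet> p | q p. q \<in> B \<and> p \<in> A}"
proof
  fix t assume "t \<in> {p \<bullet> q | p q. p \<in> A \<and> q \<in> B}"
  then obtain p q where "t = p \<bullet> q" "p \<in> A" "q \<in> B" by blast
  then have "t = q \<bullet> p" by (simp add: inner_commute)
  with \<open>p \<in> A\<close> \<open>q \<in> B\<close> show "t \<in> {q \<bullet> p | q p. q \<in> B \<and> p \<in> A}" by blast
qed

lemma swapset: fixes A B :: "(real^'n) set"
  shows "{p \<bullet> q | p q. p \<in> A \<and> q \<in> B} = {q \<bullet> p | q p. q \<in> B \<and> p \<in> A}"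
  using swap_sub[of A B] swap_sub[of B A] by (rule equalityI)

lemma maxpair_alt2: assumes G: "finite_orth_group G" and p0: "p0 \<in> orbit G z"
  shows "maxpair G z y = Max ((\<lambda>q. p0 \<bullet> q) ` orbit G y)"
proof -
  have "{p \<bullet> q | p q. p \<in> orbit G z \<and> q \<in> orbit G y} = {q \<bullet> p | q p. q \<in> orbit G y \<and> p \<in> orbit G p0}"
    unfolding orbit_eq[OF G p0] by (rule swapset)
  also have "\<dots> = (\<lambda>q. q \<bullet> p0) ` orbit G y" by (rule pairset[OF G])
  finally show ?thesis unfolding maxpair_def by (simp add: inner_commute)
qed



lemma orbit_norm: "finite_orth_group G \<Longrightarrow> p \<in> orbit G z \<Longrightarrow> norm p = norm z"
  unfolding orbit_def using fog(5) orth_norm by blast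

lemma orbit_ne: "finite_orth_group G \<Longrightarrow> orbit G x \<noteq> {}"
  using orbit_self by blast

lemma qset_eq: "{norm (p - q) |p q. p \<in> orbit G x \<and> q \<in> orbit G y} = (\<lambda>(p,q). norm (p - q)) ` (orbit G x \<times> orbit G y)"
  by auto

lemma qset_fin: "finite_orth_group G \<Longrightarrow> finite {norm (p - q) |p q. p \<in> orbit G x \<and> q \<in> orbit G y}"
  unfolding qset_eq using orbit_finite by blast

lemma qdist_le: assumes G: "finite_orth_group G" and "p \<in> orbit G x" "q \<in> orbit G y"
  shows "qdist G x y \<le> norm (p - q)"
  unfolding qdist_def using assms qset_fin[OF G] by (intro Min_le) auto

lemma qdist_att: assumes G: "finite_orth_group G"
  shows "\<exists>p\<in>orbit G x. \<exists>q\<in>orbit G y. qdist G x y = norm (p - q)"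
proof -
  have "qdist G x y \<in> {norm (p - q) |p q. p \<in> orbit G x \<and> q \<in> orbit G y}"
  proof -
    have "{norm (p - q) |p q. p \<in> orbit G x \<and> q \<in> orbit G y} \<noteq> {}"
      using orbit_self[OF G, of x] orbit_self[OF G, of y] by blast
    then show ?thesis unfolding qdist_def using qset_fin[OF G] by (intro Min_in) auto
  qed
  then show ?thesis by blast
qed

lemma qdist_nonneg: assumes G: "finite_orth_group G" shows "0 \<le> qdist G x y"
  using qdist_att[OF G, of x y] by (metis norm_ge_zero)

lemma qdist_le_norm: "finite_orth_group G \<Longrightarrow> qdist G x y \<le> norm (x - y)"
  using qdist_le orbit_self by blast

lemma qdist_sym: assumes G: "finite_orth_group G" shows "qdist G x y = qdist G y x"
proof -
  obtain p q where "p\<in>orbit G x" "q\<in>orbit G y" "qdist G x y = norm (p - q)" using qdist_att[OF G] by blast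
  moreover obtain p' q' where "p'\<in>orbit G y" "q'\<in>orbit G x" "qdist G y x = norm (p' - q')" using qdist_att[OF G] by blast
  ultimately have "qdist G x y \<le> qdist G y x" "qdist G y x \<le> qdist G x y"
    using qdist_le[OF G] by (metis norm_minus_commute)+
  then show ?thesis by simp
qed

lemma qdist_tri: assumes G: "finite_orth_group G"
  shows "qdist G x y \<le> qdist G x' y' + norm (x - x') + norm (y - y')"
proof -
  obtain p q where p: "p\<in>orbit G x'" and q: "q\<in>orbit G y'" and d: "qdist G x' y' = norm (p - q)"
    using qdist_att[OF G] by blast
  obtain g where g: "g \<in> G" "p = g *v x'" using p unfolding orbit_def by auto
  obtain h where h: "h \<in> G" "q = h *v y'" using q unfolding orbit_def by auto
  have "g *v x \<in> orbit G x" "h *v y \<in> orbit G y" using g h unfolding orbit_def by auto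
  then have "qdist G x y \<le> norm (g *v x - h *v y)" using qdist_le[OF G] by blast
  also have "g *v x - h *v y = (p - q) + g *v (x - x') - h *v (y - y')"
    using g h by (simp add: matrix_vector_mult_diff_distrib)
  also have "norm \<dots> \<le> norm (p - q) + norm (g *v (x - x')) + norm (h *v (y - y'))"
    by (smt (verit) norm_triangle_ineq norm_triangle_ineq4)
  also have "\<dots> = qdist G x' y' + norm (x - x') + norm (y - y')"
    using d fog(5)[OF G g(1)] fog(5)[OF G h(1)] by (simp add: orth_norm)
  finally show ?thesis .
qed

lemma maxpair_att: assumes G: "finite_orth_group G"
  shows "\<exists>p\<in>orbit G z. maxpair G z x = p \<bullet> x"
proof -
  have "maxpair G z x \<in> (\<lambda>p. p \<bullet> x) ` orbit G z"
    unfolding maxpair_alt[OF G] using orbit_finite[OF G] orbit_ne[OF G] by (intro Min_in Max_in) auto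
  then show ?thesis by auto
qed

lemma maxpair_ge2: assumes G: "finite_orth_group G" and "p \<in> orbit G z" "q \<in> orbit G y"
  shows "p \<bullet> q \<le> maxpair G z y"
  unfolding maxpair_alt2[OF G assms(2)] using orbit_finite[OF G] assms(3) by (intro Max_ge) auto

lemma mp_one: assumes G: "finite_orth_group G"
  shows "maxpair G z x - maxpair G z y \<le> norm z * qdist G x y"
proof -
  obtain p1 where p1: "p1 \<in> orbit G z" "maxpair G z x = p1 \<bullet> x" using maxpair_att[OF G] by blast
  obtain p0 q0 where p0: "p0\<in>orbit G x" and q0: "q0\<in>orbit G y" and d: "qdist G x y = norm (p0 - q0)"
    using qdist_att[OF G] by blast
  obtain g where g: "g \<in> G" "p0 = g *v x" using p0 unfolding orbit_def by auto
  define p2 where "p2 = g *v p1"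
  have p2: "p2 \<in> orbit G z" unfolding p2_def using orbit_mem[OF G g(1) p1(1)] .
  have "p1 \<bullet> x = p2 \<bullet> p0" unfolding p2_def g(2) using orth_inner[OF fog(5)[OF G g(1)]] by simp
  moreover have "p2 \<bullet> q0 \<le> maxpair G z y" using maxpair_ge2[OF G p2 q0] .
  ultimately have "maxpair G z x - maxpair G z y \<le> p2 \<bullet> (p0 - q0)" using p1(2) by (simp add: inner_diff_right)
  also have "\<dots> \<le> norm p2 * norm (p0 - q0)" by (rule Cauchy_Schwarz_ineq2[THEN abs_le_D1])
  also have "\<dots> = norm z * qdist G x y" using d orbit_norm[OF G p2] by simp
  finally show ?thesis .
qed

lemma mp_lip: assumes G: "finite_orth_group G"
  shows "\<bar>maxpair G z x - maxpair G z y\<bar> \<le> norm z * qdist G x y"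
proof -
  have "maxpair G z y - maxpair G z x \<le> norm z * qdist G x y"
    using mp_one[OF G, of z y x] unfolding qdist_sym[OF G, of y x] .
  then show ?thesis using mp_one[OF G, of z x y] by (simp add: abs_le_iff)
qed

lemma mf_upper: assumes G: "finite_orth_group G"
  shows "norm (max_filter G z x - max_filter G z y) \<le> (\<Sum>i\<in>UNIV. norm (z $ i)) * qdist G x y"
proof -
  have "norm (max_filter G z x - max_filter G z y) \<le> (\<Sum>i\<in>UNIV. \<bar>(max_filter G z x - max_filter G z y) $ i\<bar>)"
    by (rule norm_le_l1_cart)
  also have "\<dots> \<le> (\<Sum>i\<in>UNIV. norm (z $ i) * qdist G x y)"
    by (intro sum_mono) (simp add: max_filter_def mp_lip[OF G])
  also have "\<dots> = (\<Sum>i\<in>UNIV. norm (z $ i)) * qdist G x y" by (simp add: sum_distrib_right)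
  finally show ?thesis .
qed



lemma rpf_line: assumes "real_polynomial_function q"
  shows "real_polynomial_function (\<lambda>t::real. q (a + t *\<^sub>R b))"
proof -
  have "polynomial_function (\<lambda>t::real. a + t *\<^sub>R b)"
    by (intro polynomial_function_add polynomial_function_const polynomial_function_mult polynomial_function_id)
  from real_polynomial_function_compose[OF this assms] show ?thesis by (simp add: o_def)
qed

lemma rpf_zero_ball: fixes q :: "'a::real_normed_vector \<Rightarrow> real"
  assumes q: "real_polynomial_function q" and r: "r > 0" and z: "\<And>c. c \<in> ball a r \<Longrightarrow> q c = 0"
  shows "q b = 0"
proof -
  define h where "h = (\<lambda>t::real. q (a + t *\<^sub>R (b - a)))"
  have "real_polynomial_function h" unfolding h_def by (rule rpf_line[OF q])
  then obtain c n where hc: "h = (\<lambda>x. \<Sum>i\<le>n. c i * x^i)" using real_polynomial_function_iff_sum by blast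
  define e where "e = r / (norm (b - a) + 1)"
  have np: "norm (b - a) + 1 > 0" by (smt (verit) norm_ge_zero)
  have e: "e > 0" unfolding e_def using r np by simp
  have sub: "{0<..<e} \<subseteq> {x. (\<Sum>i\<le>n. c i * x^i) = 0}"
  proof
    fix t assume t: "t \<in> {0<..<e}"
    have "norm (b - a) * t \<le> (norm (b - a) + 1) * t" using t by (simp add: mult_right_mono)
    also have "\<dots> < (norm (b - a) + 1) * e" using t by (intro mult_strict_left_mono) (auto simp: np)
    also have "\<dots> = r" unfolding e_def using np by simp
    finally have "dist a (a + t *\<^sub>R (b - a)) < r" using t by (simp add: dist_norm mult.commute)
    then have "h t = 0" unfolding h_def using z by simp
    then show "t \<in> {x. (\<Sum>i\<le>n. c i * x^i) = 0}" using hc by simp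
  qed
  have "infinite {x::real. (\<Sum>i\<le>n. c i * x^i) = 0}"
    using infinite_Ioo[of 0 e] e sub finite_subset by blast
  then have "\<forall>i\<le>n. c i = 0" using polyfun_finite_roots by blast
  then have "h 1 = 0" using hc by simp
  then show ?thesis unfolding h_def by simp
qed

lemma rpf_mult_ne: fixes p q :: "'a::euclidean_space \<Rightarrow> real"
  assumes p: "real_polynomial_function p" and q: "real_polynomial_function q"
    and a: "p a \<noteq> 0" and b: "q b \<noteq> 0"
  shows "\<exists>c. p c * q c \<noteq> 0"
proof (rule ccontr)
  assume "\<not> (\<exists>c. p c * q c \<noteq> 0)"
  then have pq: "\<And>c. p c * q c = 0" by blast
  have "continuous_on UNIV p" using p by (simp add: continuous_on_polymonial_function real_polynomial_function_eq)
  then obtain d where d: "d > 0" "\<And>x'. dist x' a < d \<Longrightarrow> dist (p x') (p a) < \<bar>p a\<bar>"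
    unfolding continuous_on_iff using a by (metis UNIV_I zero_less_abs_iff)
  have "\<And>c. c \<in> ball a d \<Longrightarrow> q c = 0"
  proof -
    fix c assume "c \<in> ball a d"
    then have "dist c a < d" by (simp add: dist_commute)
    then have "dist (p c) (p a) < \<bar>p a\<bar>" using d(2) by blast
    then have "p c \<noteq> 0" by (auto simp: dist_real_def)
    then show "q c = 0" using pq[of c] by simp
  qed
  then have "q b = 0" using rpf_zero_ball[OF q d(1)] by blast
  then show False using b by simp
qed

lemma rpf_prod_ne: fixes f :: "'i \<Rightarrow> 'a::euclidean_space \<Rightarrow> real"
  assumes "finite I" "\<And>i. i \<in> I \<Longrightarrow> real_polynomial_function (f i)"
    "\<And>i. i \<in> I \<Longrightarrow> \<exists>z. f i z \<noteq> 0"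
  shows "real_polynomial_function (\<lambda>z. \<Prod>i\<in>I. f i z) \<and> (\<exists>z. (\<Prod>i\<in>I. f i z) \<noteq> 0)"
  using assms
proof (induction I rule: finite_induct)
  case empty
  then show ?case by auto
next
  case (insert i I)
  then have IH: "real_polynomial_function (\<lambda>z. \<Prod>i\<in>I. f i z)" "\<exists>z. (\<Prod>i\<in>I. f i z) \<noteq> 0" by auto
  have fi: "real_polynomial_function (f i)" "\<exists>z. f i z \<noteq> 0" using insert by auto
  have r: "real_polynomial_function (\<lambda>z. f i z * (\<Prod>i\<in>I. f i z))"
    using fi(1) IH(1) real_polynomial_function.intros(4) by blast
  obtain a b where "f i a \<noteq> 0" "(\<Prod>i\<in>I. f i b) \<noteq> 0" using fi IH by blast
  then obtain c where "f i c * (\<Prod>i\<in>I. f i c) \<noteq> 0" using rpf_mult_ne[OF fi(1) IH(1)] by blast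
  then show ?case using r insert(1,2) by auto
qed



definition fA :: "real^'d^'d \<Rightarrow> 'm \<Rightarrow> real^'d^'m \<Rightarrow> real" where
  "fA A i z = (\<Sum>l\<in>UNIV. (((A - mat 1) *v (z $ i)) $ l)^2)"

definition fD :: "('d \<Rightarrow> 'm) \<Rightarrow> ('d \<Rightarrow> real^'d^'d) \<Rightarrow> real^'d^'m \<Rightarrow> real" where
  "fD k g z = det (\<chi> j. g j *v (z $ k j))"

lemma bl_entry: "bounded_linear (\<lambda>z::real^'d^'m. (B *v (z $ i)) $ l)"
proof -
  have "bounded_linear (\<lambda>z::real^'d^'m. B *v (z $ i))"
    using bounded_linear_compose[OF matrix_vector_mul_bounded_linear bounded_linear_vec_nth] .
  then show ?thesis using bounded_linear_compose[OF bounded_linear_vec_nth] by blast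
qed

lemma rpf_fA: "real_polynomial_function (fA A (i::'m) :: real^'d^'m \<Rightarrow> real)"
  unfolding fA_def
  by (intro real_polynomial_function_sum real_polynomial_function_power real_polynomial_function.intros(1) bl_entry) auto

lemma rpf_fD: fixes k :: "'d::finite \<Rightarrow> 'm::finite" shows "real_polynomial_function (fD k g)"
proof -
  have e: "real_polynomial_function (\<lambda>z::real^'d^'m. (\<chi> j. g j *v (z $ k j)) $ i $ l)" for i l
    by (simp add: real_polynomial_function.intros(1) bl_entry)
  show ?thesis unfolding fD_def det_def
    by (intro real_polynomial_function_sum real_polynomial_function.intros(4) real_polynomial_function.intros(2) real_polynomial_function_prod e)
      (auto simp: finite_permutations)
qed

lemma fA_good: "fA A i z \<noteq> 0 \<Longrightarrow> A *v (z $ i) \<noteq> z $ i"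
  unfolding fA_def by (auto simp: matrix_vector_mult_diff_rdistrib)

lemma fA_ne: fixes A :: "real^'d^'d" and i :: "'m::finite" assumes "A \<noteq> mat 1" shows "\<exists>z::real^'d^'m. fA A i z \<noteq> 0"
proof -
  obtain v where v: "A *v v \<noteq> mat 1 *v v" using assms matrix_eq by blast
  define w where "w = (A - mat 1) *v v"
  have w: "w \<noteq> 0" using v unfolding w_def by (simp add: matrix_vector_mult_diff_rdistrib)
  then obtain l where l: "w $ l \<noteq> 0" by (metis vec_eq_iff zero_index)
  define z :: "real^'d^'m" where "z = (\<chi> i. v)"
  have "fA A i z = (\<Sum>l\<in>UNIV. (w $ l)^2)" unfolding fA_def z_def w_def by simp
  moreover have "(\<Sum>l\<in>UNIV. (w $ l)^2) \<noteq> 0"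
  proof
    assume "(\<Sum>l\<in>UNIV. (w $ l)^2) = 0"
    then have "\<forall>l\<in>UNIV. (w $ l)^2 = 0" by (subst sum_nonneg_eq_0_iff[symmetric]) auto
    then show False using l by simp
  qed
  ultimately show ?thesis by (intro exI[of _ z]) simp
qed

lemma fD_ne: fixes k :: "'d::finite \<Rightarrow> 'm::finite" assumes G: "finite_orth_group G" and k: "inj k" and g: "\<And>j. g j \<in> G"
  shows "\<exists>z. fD k g z \<noteq> 0"
proof -
  define z :: "real^'d^'m" where "z = (\<chi> i. if i \<in> range k then transpose (g (inv k i)) *v axis (inv k i) 1 else 0)"
  have zk: "z $ k j = transpose (g j) *v axis j 1" for j unfolding z_def using k by simp
  have "(\<chi> j. g j *v (z $ k j)) = (mat 1 :: real^'d^'d)"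
  proof -
    have "g j *v (z $ k j) = mat 1 $ j" for j
    proof -
      have "g j *v (z $ k j) = (g j ** transpose (g j)) *v axis j 1" by (simp only: zk matrix_vector_mul_assoc)
      also have "\<dots> = axis j 1" using orth_tt[OF fog(5)[OF G g]] by simp
      also have "\<dots> = mat 1 $ j" by (simp add: vec_eq_iff axis_def mat_def)
      finally show ?thesis .
    qed
    then show ?thesis by (simp add: vec_eq_iff)
  qed
  then have "fD k g z = 1" unfolding fD_def by simp
  then show ?thesis by (intro exI[of _ z]) simp
qed

definition PP :: "(real^'d^'d) set \<Rightarrow> real^'d^'m \<Rightarrow> real" where
  "PP G z = (\<Prod>i\<in>UNIV. \<Prod>A\<in>G-{mat 1}. fA A i z) * (\<Prod>k\<in>{k. inj k}. \<Prod>g\<in>PiE UNIV (\<lambda>_. G). fD k g z)"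

lemma PP_ok: fixes G :: "(real^'d^'d) set" assumes G: "finite_orth_group G"
  shows "real_polynomial_function (PP G :: real^'d^'m \<Rightarrow> real) \<and> (\<exists>z::real^'d^'m. PP G z \<noteq> 0)"
proof -
  have fG: "finite G" using fog[OF G] by simp
  have 1: "real_polynomial_function (\<lambda>z. \<Prod>A\<in>G-{mat 1}. fA A i z) \<and> (\<exists>z. (\<Prod>A\<in>G-{mat 1}. fA A i z) \<noteq> 0)" for i :: 'm
    using fG by (intro rpf_prod_ne rpf_fA fA_ne) auto
  have 1: "real_polynomial_function (\<lambda>z. \<Prod>i\<in>(UNIV::'m set). \<Prod>A\<in>G-{mat 1}. fA A i z) \<and> (\<exists>z. (\<Prod>i\<in>(UNIV::'m set). \<Prod>A\<in>G-{mat 1}. fA A i z) \<noteq> 0)"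
    apply (rule rpf_prod_ne[where f="\<lambda>i z. \<Prod>A\<in>G-{mat 1}. fA A i z"])
    using 1 by (simp, blast, blast)
  have fP: "finite (PiE (UNIV::'d set) (\<lambda>_. G))" using fG by (intro finite_PiE) auto
  have 2: "real_polynomial_function (\<lambda>z. \<Prod>g\<in>PiE UNIV (\<lambda>_. G). fD k g z) \<and> (\<exists>z. (\<Prod>g\<in>PiE UNIV (\<lambda>_. G). fD k g z) \<noteq> 0)"
    if k: "inj k" for k :: "'d \<Rightarrow> 'm"
    using fP by (intro rpf_prod_ne rpf_fD fD_ne[OF G k]) (auto simp: PiE_iff)
  have 2: "real_polynomial_function (\<lambda>z. \<Prod>k\<in>{k::'d\<Rightarrow>'m. inj k}. \<Prod>g\<in>PiE UNIV (\<lambda>_. G). fD k g z) \<and> (\<exists>z. (\<Prod>k\<in>{k::'d\<Rightarrow>'m. inj k}. \<Prod>g\<in>PiE UNIV (\<lambda>_. G). fD k g z) \<noteq> 0)"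
    apply (rule rpf_prod_ne[where f="\<lambda>k z. \<Prod>g\<in>PiE UNIV (\<lambda>_. G). fD k g z"])
    using 2 by (simp, blast, blast)
  have e: "PP G = (\<lambda>z. (\<Prod>i\<in>(UNIV::'m set). \<Prod>A\<in>G-{mat 1}. fA A i z) * (\<Prod>k\<in>{k::'d\<Rightarrow>'m. inj k}. \<Prod>g\<in>PiE UNIV (\<lambda>_. G). fD k g z))"
    by (rule ext) (simp only: PP_def)
  have r: "real_polynomial_function (PP G :: real^'d^'m \<Rightarrow> real)" unfolding e
    by (rule real_polynomial_function.intros(4)[OF conjunct1[OF 1] conjunct1[OF 2]])
  obtain a b where "(\<Prod>i\<in>(UNIV::'m set). \<Prod>A\<in>G-{mat 1}. fA A i a) \<noteq> 0" "(\<Prod>k\<in>{k::'d\<Rightarrow>'m. inj k}. \<Prod>g\<in>PiE UNIV (\<lambda>_. G). fD k g b) \<noteq> 0"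
    using 1 2 by blast
  from rpf_mult_ne[OF conjunct1[OF 1] conjunct1[OF 2] this] have "\<exists>c::real^'d^'m. PP G c \<noteq> 0" unfolding e .
  with r show ?thesis by blast
qed

lemma PP_good: fixes G :: "(real^'d^'d) set" and z :: "real^'d^'m" assumes G: "finite_orth_group G" and z: "PP G z \<noteq> 0"
  shows "\<And>i A. A \<in> G \<Longrightarrow> A \<noteq> mat 1 \<Longrightarrow> A *v (z $ i) \<noteq> z $ i"
    and "\<And>k g. inj k \<Longrightarrow> (\<And>j. g j \<in> G) \<Longrightarrow> det (\<chi> j. g j *v (z $ k j)) \<noteq> 0"
proof -
  have fG: "finite G" using fog[OF G] by simp
  have fP: "finite (PiE (UNIV::'d set) (\<lambda>_. G))" using fG by (intro finite_PiE) auto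
  have a: "(\<Prod>i\<in>(UNIV::'m set). \<Prod>A\<in>G-{mat 1}. fA A i z) \<noteq> 0" and b: "(\<Prod>k\<in>{k::'d\<Rightarrow>'m. inj k}. \<Prod>g\<in>PiE UNIV (\<lambda>_. G). fD k g z) \<noteq> 0"
    using z unfolding PP_def by auto
  {
    fix i A assume A: "A \<in> G" "A \<noteq> mat 1"
    have "fA A i z \<noteq> 0" using a fG A by simp
    then show "A *v (z $ i) \<noteq> z $ i" by (rule fA_good)
  }
  {
    fix k :: "'d \<Rightarrow> 'm" and g :: "'d \<Rightarrow> real^'d^'d" assume "inj k" "\<And>j. g j \<in> G"
    then have gk: "g \<in> PiE UNIV (\<lambda>_. G)" "k \<in> {k. inj k}" by (auto simp: PiE_iff)
    have fK: "finite {k::'d\<Rightarrow>'m. inj k}" by simp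
    have "fD k g z \<noteq> 0" using b fK fP gk by simp
    then show "det (\<chi> j. g j *v (z $ k j)) \<noteq> 0" unfolding fD_def .
  }
qed



lemma orbit_free: assumes G: "finite_orth_group G"
  and zf: "\<And>A. A \<in> G \<Longrightarrow> A \<noteq> mat 1 \<Longrightarrow> A *v z \<noteq> z"
  and p: "p \<in> orbit G z" and B: "B \<in> G" and Bp: "B *v p = p"
  shows "B = mat 1"
proof -
  obtain g where g: "g \<in> G" "p = g *v z" using p unfolding orbit_def by auto
  have og: "transpose g ** g = mat 1" "g ** transpose g = mat 1" using orth_tt[OF fog(5)[OF G g(1)]] by auto
  define C where "C = transpose g ** B ** g"
  have C: "C \<in> G" unfolding C_def using fog[OF G] g B by auto
  have "C *v z = transpose g *v (B *v (g *v z))" by (simp only: C_def matrix_vector_mul_assoc matrix_mul_assoc)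
  also have "B *v (g *v z) = g *v z" using Bp g(2) by simp
  also have "transpose g *v (g *v z) = z" by (simp add: matrix_vector_mul_assoc og)
  finally have "C = mat 1" using zf C by blast
  then have "g ** C ** transpose g = mat 1" using og by simp
  moreover have "g ** C ** transpose g = B" unfolding C_def
    by (simp add: matrix_mul_assoc og) (simp add: og flip: matrix_mul_assoc)
  ultimately show ?thesis by simp
qed

lemma argmax_ex: "finite S \<Longrightarrow> S \<noteq> {} \<Longrightarrow> \<exists>p\<in>S. \<forall>p'\<in>S. (f p' :: real) \<le> f p"
proof -
  assume "finite S" "S \<noteq> {}"
  then have "Max (f ` S) \<in> f ` S" "\<forall>p'\<in>S. f p' \<le> Max (f ` S)" by auto
  then show ?thesis by force
qed

lemma norm_sub: fixes u :: "real^'d" and v :: "real^'m"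
  assumes k: "inj k" and uv: "\<And>j. u $ j = v $ k j"
  shows "norm u \<le> norm v"
proof -
  have "(\<Sum>j\<in>UNIV. (u $ j)^2) = (\<Sum>i\<in>range k. (v $ i)^2)"
    using sum.reindex[OF k, of "\<lambda>i. (v $ i)^2"] uv by simp
  also have "\<dots> \<le> (\<Sum>i\<in>UNIV. (v $ i)^2)" by (intro sum_mono2) auto
  finally show ?thesis by (simp add: norm_vec_def L2_set_def)
qed

lemma card_Sset: assumes G: "finite_orth_group G" and x: "x \<in> principal G" and y: "y \<in> principal G"
  shows "finite (Sset G x y)" "card (Sset G x y) \<le> voronoi_char G"
proof -
  have sub: "Sset G x y \<subseteq> orbit G y" unfolding Sset_def by auto
  show fin: "finite (Sset G x y)" using finite_subset[OF sub orbit_finite[OF G]] .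
  have cG: "card (Sset G x' y') \<le> card G" for x' y'
  proof -
    have "card (Sset G x' y') \<le> card (orbit G y')"
      using card_mono[OF orbit_finite[OF G]] unfolding Sset_def by auto
    also have "\<dots> \<le> card G" unfolding orbit_def using card_image_le fog(1)[OF G] by blast
    finally show ?thesis .
  qed
  have "{card (Sset G x y) | x y. x \<in> principal G \<and> y \<in> principal G} \<subseteq> {..card G}" using cG by auto
  then have "finite {card (Sset G x y) | x y. x \<in> principal G \<and> y \<in> principal G}" using finite_subset by blast
  then show "card (Sset G x y) \<le> voronoi_char G" unfolding voronoi_char_def using x y by (intro Max_ge) auto
qed

lemma pigeon: fixes Q :: "'m::finite \<Rightarrow> 'b"
  assumes S: "finite S" "\<And>i. Q i \<in> S" and big: "CARD('m) > card S * (CARD('d::finite) - 1)"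
  shows "\<exists>q\<in>S. CARD('d) \<le> card {i. Q i = q}"
proof (rule ccontr)
  assume "\<not> ?thesis"
  then have lt: "\<And>q. q \<in> S \<Longrightarrow> card {i. Q i = q} \<le> CARD('d) - 1" by force
  have "(UNIV::'m set) = (\<Union>q\<in>S. {i. Q i = q})" using S by auto
  then have "CARD('m) = card (\<Union>q\<in>S. {i. Q i = q})" by simp
  also have "\<dots> = (\<Sum>q\<in>S. card {i. Q i = q})" by (rule card_UN_disjoint) (use S in auto)
  also have "\<dots> \<le> (\<Sum>q\<in>S. CARD('d) - 1)" by (intro sum_mono lt)
  also have "\<dots> = card S * (CARD('d) - 1)" by simp
  finally show False using big by simp
qed



lemma core:
  fixes G :: "(real^'d^'d) set" and z :: "real^'d^'m" and x y :: "real^'d"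
  assumes G: "finite_orth_group G"
    and big: "CARD('m) > voronoi_char G * (CARD('d) - 1)"
    and zf: "\<And>i A. A \<in> G \<Longrightarrow> A \<noteq> mat 1 \<Longrightarrow> A *v (z $ i) \<noteq> z $ i"
    and c0: "c \<ge> 0"
    and c: "\<And>M v. (\<And>j. \<exists>i. M $ j \<in> orbit G (z $ i)) \<Longrightarrow> det M \<noteq> 0 \<Longrightarrow> c * norm v \<le> norm (M *v v)"
    and zdet: "\<And>k g. inj k \<Longrightarrow> (\<And>j. g j \<in> G) \<Longrightarrow> det (\<chi> j. g j *v (z $ k j)) \<noteq> 0"
    and xp: "x \<in> principal G" and yp: "y \<in> principal G"
    and xc: "\<And>i p p'. p \<in> orbit G (z$i) \<Longrightarrow> p' \<in> orbit G (z$i) \<Longrightarrow> p \<noteq> p' \<Longrightarrow> p \<bullet> x \<noteq> p' \<bullet> x"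
    and yc: "\<And>i p q q'. p \<in> orbit G (z$i) \<Longrightarrow> q \<in> orbit G y \<Longrightarrow> q' \<in> orbit G y \<Longrightarrow> q \<noteq> q' \<Longrightarrow> p \<bullet> q \<noteq> p \<bullet> q'"
  shows "c * qdist G x y \<le> norm (max_filter G z x - max_filter G z y)"
proof -
  have "\<exists>p. p \<in> orbit G (z$i) \<and> (\<forall>p'\<in>orbit G (z$i). p' \<bullet> x \<le> p \<bullet> x)" for i
    using argmax_ex[OF orbit_finite[OF G] orbit_ne[OF G], where f="\<lambda>p. p \<bullet> x"] by blast
  then have "\<forall>i. \<exists>p. p \<in> orbit G (z$i) \<and> (\<forall>p'\<in>orbit G (z$i). p' \<bullet> x \<le> p \<bullet> x)" by blast
  from choice[OF this] obtain P where "\<forall>i. P i \<in> orbit G (z$i) \<and> (\<forall>p'\<in>orbit G (z$i). p' \<bullet> x \<le> P i \<bullet> x)"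
    by blast
  then have P: "\<And>i. P i \<in> orbit G (z$i)" "\<And>i p'. p' \<in> orbit G (z$i) \<Longrightarrow> p' \<bullet> x \<le> P i \<bullet> x"
    by blast+
  have "\<exists>q. q \<in> orbit G y \<and> (\<forall>q'\<in>orbit G y. P i \<bullet> q' \<le> P i \<bullet> q)" for i
    using argmax_ex[OF orbit_finite[OF G] orbit_ne[OF G], where f="\<lambda>q. P i \<bullet> q"] by blast
  then have "\<forall>i. \<exists>q. q \<in> orbit G y \<and> (\<forall>q'\<in>orbit G y. P i \<bullet> q' \<le> P i \<bullet> q)" by blast
  from choice[OF this] obtain Q where "\<forall>i. Q i \<in> orbit G y \<and> (\<forall>q'\<in>orbit G y. P i \<bullet> q' \<le> P i \<bullet> Q i)"
    by blast
  then have Q: "\<And>i. Q i \<in> orbit G y" "\<And>i q'. q' \<in> orbit G y \<Longrightarrow> P i \<bullet> q' \<le> P i \<bullet> Q i"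
    by blast+
  have phx: "max_filter G z x $ i = P i \<bullet> x" for i
    unfolding max_filter_def maxpair_alt[OF G] using P orbit_finite[OF G] by (simp, intro Max_eqI) auto
  have phy: "max_filter G z y $ i = P i \<bullet> Q i" for i
  proof -
    have "max_filter G z y $ i = maxpair G (z$i) y" by (simp add: max_filter_def)
    also have "\<dots> = Max ((\<lambda>q. P i \<bullet> q) ` orbit G y)" by (rule maxpair_alt2[OF G P(1)])
    also have "\<dots> = P i \<bullet> Q i" using Q orbit_finite[OF G] by (intro Max_eqI) auto
    finally show ?thesis .
  qed
  have QS: "Q i \<in> Sset G x y" for i
  proof -
    have v1: "P i \<in> voronoi G (Q i)"
      unfolding voronoi_def
    proof (intro CollectI ballI impI)
      fix p assume p: "p \<in> orbit G (Q i)" "p \<noteq> Q i"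
      have py: "p \<in> orbit G y" using p(1) orbit_eq[OF G Q(1)[of i]] by simp
      have "P i \<bullet> p \<le> P i \<bullet> Q i" using Q(2)[OF py] .
      moreover have "P i \<bullet> p \<noteq> P i \<bullet> Q i" using yc[OF P(1) py Q(1) p(2)] .
      ultimately show "p \<bullet> P i < Q i \<bullet> P i" by (simp add: inner_commute)
    qed
    have v2: "P i \<in> voronoi G x"
      unfolding voronoi_def
    proof (intro CollectI ballI impI)
      fix p assume p: "p \<in> orbit G x" "p \<noteq> x"
      obtain h where h: "h \<in> G" "p = h *v x" using p(1) unfolding orbit_def by auto
      define p' where "p' = transpose h *v P i"
      have p'o: "p' \<in> orbit G (z$i)" unfolding p'_def using orbit_mem[OF G fog(4)[OF G h(1)] P(1)] .
      have "p' \<noteq> P i"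
      proof
        assume "p' = P i"
        then have "transpose h = mat 1"
          using orbit_free[OF G _ P(1)[of i] fog(4)[OF G h(1)]] zf unfolding p'_def by blast
        then have "h = mat 1" by (metis transpose_mat transpose_transpose)
        then show False using p h by simp
      qed
      then have "p' \<bullet> x \<noteq> P i \<bullet> x" using xc[OF p'o P(1)] by blast
      moreover have "p' \<bullet> x \<le> P i \<bullet> x" using P(2)[OF p'o] .
      moreover have "p \<bullet> P i = p' \<bullet> x" unfolding h(2) p'_def
        using transp_inner[of h x "P i"] inner_commute[of x "transpose h *v P i"] by (rule trans)
      ultimately show "p \<bullet> P i < x \<bullet> P i" by (simp add: inner_commute)
    qed
    show ?thesis unfolding Sset_def using Q(1) v1 v2 by blast
  qed
  have fS: "finite (Sset G x y)" and cS: "card (Sset G x y) \<le> voronoi_char G"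
    using card_Sset[OF G xp yp] by auto
  have "card (Sset G x y) * (CARD('d) - 1) \<le> voronoi_char G * (CARD('d) - 1)"
    using cS by (rule mult_le_mono1)
  then have big2: "CARD('m) > card (Sset G x y) * (CARD('d) - 1)" using big by (rule le_less_trans)
  have "\<exists>q\<in>Sset G x y. CARD('d) \<le> card {i. Q i = q}" by (rule pigeon[OF fS QS big2])
  then obtain q where q: "q \<in> Sset G x y" and cq: "CARD('d) \<le> card {i. Q i = q}" by (elim bexE)
  have "Sset G x y \<subseteq> orbit G y" unfolding Sset_def by (rule Collect_subset)
  then have qy: "q \<in> orbit G y" using q by (rule subsetD)
  obtain k :: "'d \<Rightarrow> 'm" where k: "k ` UNIV \<subseteq> {i. Q i = q}" "inj_on k UNIV"
  proof -
    have "\<exists>f. f ` (UNIV::'d set) \<subseteq> {i. Q i = q} \<and> inj_on f UNIV"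
      by (rule card_le_inj) (use cq in auto)
    then show ?thesis using that by blast
  qed
  have kq: "Q (k j) = q" for j using k(1) by blast
  have "\<forall>i. \<exists>g. g \<in> G \<and> P i = g *v (z $ i)" using P(1) unfolding orbit_def by auto
  from choice[OF this] obtain gg where "\<forall>i. gg i \<in> G \<and> P i = gg i *v (z $ i)" by blast
  then have gg: "\<And>i. gg i \<in> G" "\<And>i. P i = gg i *v (z $ i)" by blast+
  define M where "M = (\<chi> j. gg (k j) *v (z $ k j))"
  have dM: "det M \<noteq> 0" unfolding M_def using zdet[of k "\<lambda>j. gg (k j)"] k(2) gg(1) by blast
  have Mj: "M $ j = P (k j)" for j unfolding M_def using gg(2) by simp
  have "\<exists>i. M $ j \<in> orbit G (z $ i)" for j unfolding Mj using P(1) by blast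
  then have cM: "c * norm (x - q) \<le> norm (M *v (x - q))" using c dM by blast
  have comp: "(M *v (x - q)) $ j = (max_filter G z x - max_filter G z y) $ k j" for j
    by (simp add: matrix_vector_mul_component Mj phx phy kq inner_diff_right)
  have "norm (M *v (x - q)) \<le> norm (max_filter G z x - max_filter G z y)"
    using norm_sub[OF k(2) comp] .
  moreover have "c * qdist G x y \<le> c * norm (x - q)"
    using qdist_le[OF G orbit_self[OF G, of x] qy] c0 by (rule mult_left_mono)
  ultimately show ?thesis using cM by linarith
qed



lemma hyper_int: fixes w :: "real^'d" assumes w: "w \<noteq> 0"
  shows "interior {v. w \<bullet> v = 0} = {}"
proof (rule ccontr)
  assume "interior {v. w \<bullet> v = 0} \<noteq> {}"
  then obtain v where "v \<in> interior {v. w \<bullet> v = 0}" by blast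
  then obtain e where e: "e > 0" "ball v e \<subseteq> {v. w \<bullet> v = 0}" unfolding mem_interior by blast
  have nw: "norm w > 0" using w by simp
  define t where "t = e / (2 * norm w)"
  have t: "t > 0" unfolding t_def using e nw by simp
  have "dist v (v + t *\<^sub>R w) = t * norm w" using t by (simp add: dist_norm)
  also have "\<dots> = e / 2" unfolding t_def using nw by simp
  finally have "v + t *\<^sub>R w \<in> ball v e" using e by simp
  moreover have "v \<in> ball v e" using e by simp
  ultimately have "w \<bullet> (v + t *\<^sub>R w) = 0" "w \<bullet> v = 0" using e(2) by blast+
  then have "t * (w \<bullet> w) = 0" by (simp add: inner_add_right)
  then show False using t w by simp
qed

lemma union_int: "finite F \<Longrightarrow> (\<And>S. S \<in> F \<Longrightarrow> closed S \<and> interior S = {}) \<Longrightarrow> interior (\<Union>F) = ({}::'a::real_normed_vector set)"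
proof (induction F rule: finite_induct)
  case empty
  then show ?case by simp
next
  case (insert S F)
  then have "interior (\<Union>F) = {}" by blast
  moreover have "closed S" "interior S = {}" using insert by auto
  ultimately show ?case using interior_closed_Un_empty_interior[of S "\<Union>F"] by simp
qed

lemma dense_avoid: fixes W :: "(real^'d) set"
  assumes W: "finite W" and e: "e > 0"
  shows "\<exists>x'. dist x' x < e \<and> (\<forall>w\<in>W. w \<noteq> 0 \<longrightarrow> w \<bullet> x' \<noteq> 0)"
proof -
  define S where "S = \<Union>((\<lambda>w. {v. w \<bullet> v = 0}) ` (W - {0}))"
  have "interior S = {}" unfolding S_def
    by (rule union_int) (use W hyper_int closed_hyperplane in auto)
  then have "x \<in> closure (- S)" by (simp add: closure_complement)
  then obtain y where "y \<in> - S" "dist y x < e" using e unfolding closure_approachable by blast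
  then show ?thesis unfolding S_def by blast
qed

lemma finite_uniform: fixes f g :: "'s \<Rightarrow> 'v \<Rightarrow> real"
  assumes "finite S" "\<And>s. s \<in> S \<Longrightarrow> \<exists>e>0. \<forall>v. e * f s v \<le> g s v" "\<And>s v. 0 \<le> f s v"
  shows "\<exists>c>0. \<forall>s\<in>S. \<forall>v. c * f s v \<le> g s v"
  using assms
proof (induction S rule: finite_induct)
  case empty
  then show ?case by (intro exI[of _ 1]) simp
next
  case (insert s S)
  then obtain c where c: "c > 0" "\<forall>s\<in>S. \<forall>v. c * f s v \<le> g s v" by blast
  obtain e where e: "e > 0" "\<forall>v. e * f s v \<le> g s v" using insert by blast
  have "\<forall>s'\<in>insert s S. \<forall>v. min c e * f s' v \<le> g s' v"
  proof (intro ballI allI)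
    fix s' v assume "s' \<in> insert s S"
    then show "min c e * f s' v \<le> g s' v"
    proof
      assume "s' = s"
      then show ?thesis using e(2) mult_right_mono[OF min.cobounded2 insert.prems(2)] by (metis order_trans)
    next
      assume "s' \<in> S"
      then show ?thesis using c(2) mult_right_mono[OF min.cobounded1 insert.prems(2)] by (metis order_trans)
    qed
  qed
  then show ?case using c e by (intro exI[of _ "min c e"]) simp
qed

lemma det_bb: fixes M :: "real^'d^'d" assumes "det M \<noteq> 0"
  shows "\<exists>e>0. \<forall>v. e * norm v \<le> norm (M *v v)"
proof -
  obtain B where B: "B ** M = mat 1" using assms invertible_det_nz invertible_left_inverse by blast
  have inj: "\<forall>x\<in>UNIV. M *v x = 0 \<longrightarrow> x = 0"
  proof (intro ballI impI)
    fix x assume "M *v x = 0"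
    then have "B *v (M *v x) = 0" by simp
    then show "x = 0" by (simp add: matrix_vector_mul_assoc B)
  qed
  obtain e where "e > 0" "\<forall>x\<in>UNIV. norm (M *v x) \<ge> e * norm x"
    using injective_imp_isometric[OF closed_UNIV subspace_UNIV matrix_vector_mul_bounded_linear inj] by blast
  then show ?thesis by auto
qed

lemma finite_rows: fixes Z :: "(real^'d) set" assumes "finite Z"
  shows "finite {M::real^'d^'d. \<forall>j. M $ j \<in> Z}"
proof -
  have "{M::real^'d^'d. \<forall>j. M $ j \<in> Z} \<subseteq> (\<lambda>f. \<chi> j. f j) ` (PiE UNIV (\<lambda>_. Z))"
  proof
    fix M :: "real^'d^'d" assume "M \<in> {M. \<forall>j. M $ j \<in> Z}"
    then have "vec_nth M \<in> PiE UNIV (\<lambda>_. Z)" by (auto simp: PiE_iff)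
    then show "M \<in> (\<lambda>f. \<chi> j. f j) ` (PiE UNIV (\<lambda>_. Z))" by (metis image_eqI vec_lambda_eta)
  qed
  moreover have "finite (PiE (UNIV::'d set) (\<lambda>_. Z))" using assms by (intro finite_PiE) auto
  ultimately show ?thesis using finite_subset by blast
qed



definition Rset :: "(real^'d^'d) set \<Rightarrow> (real^'d) set" where
  "Rset G = (\<lambda>(A,l). (A - mat 1) $ l) ` (G \<times> UNIV)"

lemma Rset_fin: assumes G: "finite_orth_group G" shows "finite (Rset G)"
  unfolding Rset_def using fog(1)[OF G] by (intro finite_imageI finite_cartesian_product) auto

lemma avoidR: fixes G :: "(real^'d^'d) set" assumes G: "finite_orth_group G" and x: "\<forall>w\<in>Rset G. w \<noteq> 0 \<longrightarrow> w \<bullet> x \<noteq> 0"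
  shows "x \<in> principal G"
proof -
  have key: "A = mat 1" if A: "A \<in> G" "A *v x = x" for A
  proof (rule ccontr)
    assume "A \<noteq> mat 1"
    then have "A - mat 1 \<noteq> 0" by simp
    then obtain l where l: "(A - mat 1) $ l \<noteq> 0" by (metis vec_eq_iff zero_index)
    have "(A - mat 1) $ l \<in> Rset G" unfolding Rset_def using A(1) by (intro image_eqI[where x="(A,l)"]) auto
    then have "(A - mat 1) $ l \<bullet> x \<noteq> 0" using x l by blast
    moreover have "(A - mat 1) $ l \<bullet> x = ((A - mat 1) *v x) $ l" by (simp add: matrix_vector_mul_component)
    moreover have "(A - mat 1) *v x = 0" using A(2) by (simp add: matrix_vector_mult_diff_rdistrib)
    ultimately show False by simp
  qed
  have "{A\<in>G. A *v x = x} = {mat 1}"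
  proof (intro equalityI subsetI)
    fix A assume "A \<in> {A\<in>G. A *v x = x}"
    then have "A = mat 1" using key by blast
    then show "A \<in> {mat 1}" by simp
  next
    fix A assume "A \<in> {mat 1::real^'d^'d}"
    then show "A \<in> {A\<in>G. A *v x = x}" using fog(2)[OF G] by simp
  qed
  then show ?thesis unfolding principal_def by (rule CollectI)
qed

definition Wx :: "(real^'d^'d) set \<Rightarrow> real^'d^'m \<Rightarrow> (real^'d) set" where
  "Wx G z = (\<lambda>(i,g,h). g *v (z$i) - h *v (z$i)) ` (UNIV \<times> G \<times> G) \<union> Rset G"

definition Wy :: "(real^'d^'d) set \<Rightarrow> real^'d^'m \<Rightarrow> (real^'d) set" where
  "Wy G z = (\<lambda>(p,g,h). transpose g *v p - transpose h *v p) ` ((\<Union>i. orbit G (z$i)) \<times> G \<times> G) \<union> Rset G"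

lemma Wx_fin: assumes G: "finite_orth_group G" shows "finite (Wx G z)"
  unfolding Wx_def using fog(1)[OF G] Rset_fin[OF G] by (intro finite_UnI finite_imageI finite_cartesian_product) auto

lemma Wy_fin: assumes G: "finite_orth_group G" shows "finite (Wy G z)"
  unfolding Wy_def using fog(1)[OF G] Rset_fin[OF G] orbit_finite[OF G]
  by (intro finite_UnI finite_imageI finite_cartesian_product finite_UN_I) auto

lemma xcond: assumes G: "finite_orth_group G" and x: "\<forall>w\<in>Wx G z. w \<noteq> 0 \<longrightarrow> w \<bullet> x \<noteq> 0"
  and p: "p \<in> orbit G (z$i)" and p': "p' \<in> orbit G (z$i)" and ne: "p \<noteq> p'"
  shows "p \<bullet> x \<noteq> p' \<bullet> x"
proof -
  obtain g where g: "g \<in> G" "p = g *v (z$i)" using p unfolding orbit_def by auto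
  obtain h where h: "h \<in> G" "p' = h *v (z$i)" using p' unfolding orbit_def by auto
  have "p - p' \<in> Wx G z" unfolding Wx_def using g h by (intro UnI1 image_eqI[where x="(i,g,h)"]) auto
  then have "(p - p') \<bullet> x \<noteq> 0" using x ne by simp
  then show ?thesis by (simp add: inner_diff_left)
qed

lemma ycond: assumes G: "finite_orth_group G" and y: "\<forall>w\<in>Wy G z. w \<noteq> 0 \<longrightarrow> w \<bullet> y \<noteq> 0"
  and zf: "\<And>i A. A \<in> G \<Longrightarrow> A \<noteq> mat 1 \<Longrightarrow> A *v (z $ i) \<noteq> z $ i"
  and p: "p \<in> orbit G (z$i)" and q: "q \<in> orbit G y" and q': "q' \<in> orbit G y" and ne: "q \<noteq> q'"
  shows "p \<bullet> q \<noteq> p \<bullet> q'"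
proof -
  obtain g where g: "g \<in> G" "q = g *v y" using q unfolding orbit_def by auto
  obtain h where h: "h \<in> G" "q' = h *v y" using q' unfolding orbit_def by auto
  define w where "w = transpose g *v p - transpose h *v p"
  have wW: "w \<in> Wy G z" unfolding Wy_def w_def using g h p by (intro UnI1 image_eqI[where x="(p,g,h)"]) auto
  have wy: "w \<bullet> y = p \<bullet> q - p \<bullet> q'"
    unfolding w_def g(2) h(2) inner_diff_left
    using transp_inner[of "transpose g" p y] transp_inner[of "transpose h" p y] by (simp only: transpose_transpose)
  show ?thesis
  proof (cases "w = 0")
    case False
    then show ?thesis using y wW wy by auto
  next
    case True
    then have e: "transpose g *v p = transpose h *v p" unfolding w_def by simp
    have og: "g ** transpose g = mat 1" "transpose g ** g = mat 1" using orth_tt[OF fog(5)[OF G g(1)]] by auto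
    have oh: "h ** transpose h = mat 1" using orth_tt[OF fog(5)[OF G h(1)]] by auto
    have "(h ** transpose g) *v p = h *v (transpose g *v p)" by (simp only: matrix_vector_mul_assoc)
    also have "\<dots> = h *v (transpose h *v p)" by (simp only: e)
    also have "\<dots> = p" by (simp only: matrix_vector_mul_assoc oh matrix_vector_mul_lid)
    finally have hp: "(h ** transpose g) *v p = p" .
    have hg1: "h ** transpose g = mat 1"
      by (rule orbit_free[OF G zf[of _ i] p fog(3)[OF G h(1) fog(4)[OF G g(1)]] hp])
    have "h = h ** (transpose g ** g)" by (simp add: og)
    also have "\<dots> = (h ** transpose g) ** g" by (rule matrix_mul_assoc)
    also have "\<dots> = g" using hg1 by simp
    finally have "h = g" .
    then show ?thesis using g h ne by simp
  qed
qed



theorem theorem31: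
  fixes G :: "(real^'d^'d) set"
  assumes "finite_orth_group G"
    and "CARD('m) > voronoi_char G * (CARD('d) - 1)"
  shows "generic (\<lambda>z :: real^'d^'m. bilipschitz_mf G z)"
proof -
  note G = assms(1) and big = assms(2)
  have bl: "bilipschitz_mf G z" if z: "PP G z \<noteq> 0" for z :: "real^'d^'m"
  proof -
    note zf = PP_good(1)[OF G z] and zdet = PP_good(2)[OF G z]
    define Ms where "Ms = {M::real^'d^'d. (\<forall>j. \<exists>i. M $ j \<in> orbit G (z $ i)) \<and> det M \<noteq> 0}"
    have "finite (\<Union>i. orbit G (z $ i))" using orbit_finite[OF G] by (intro finite_UN_I) auto
    then have "finite {M::real^'d^'d. \<forall>j. M $ j \<in> (\<Union>i. orbit G (z $ i))}" by (rule finite_rows)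
    moreover have "Ms \<subseteq> {M::real^'d^'d. \<forall>j. M $ j \<in> (\<Union>i. orbit G (z $ i))}" unfolding Ms_def by blast
    ultimately have fMs: "finite Ms" by (rule finite_subset[rotated])
    have "\<exists>c>0. \<forall>M\<in>Ms. \<forall>v. c * norm v \<le> norm (M *v v)"
    proof (rule finite_uniform[OF fMs])
      fix M assume "M \<in> Ms"
      then have "det M \<noteq> 0" unfolding Ms_def by blast
      then show "\<exists>e>0. \<forall>v. e * norm v \<le> norm (M *v v)" by (rule det_bb)
    qed simp
    then obtain c where c0: "c > 0" and cM: "\<forall>M\<in>Ms. \<forall>v. c * norm v \<le> norm (M *v v)" by blast
    have cc: "c * norm v \<le> norm (M *v v)" if "\<And>j. \<exists>i. M $ j \<in> orbit G (z $ i)" "det M \<noteq> 0" for M v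
    proof -
      have "M \<in> Ms" unfolding Ms_def using that by blast
      then show ?thesis using cM by blast
    qed
    define b0 where "b0 = (\<Sum>i\<in>UNIV. norm (z $ i))"
    have b0: "b0 \<ge> 0" unfolding b0_def by (intro sum_nonneg) auto
    have upper: "norm (max_filter G z x - max_filter G z y) \<le> b0 * qdist G x y" for x y
      unfolding b0_def by (rule mf_upper[OF G])
    have upper2: "norm (max_filter G z x - max_filter G z y) \<le> b0 * norm (x - y)" for x y
      using upper[of x y] mult_left_mono[OF qdist_le_norm[OF G, of x y] b0] by linarith
    have good: "c * qdist G x y \<le> norm (max_filter G z x - max_filter G z y)"
      if x: "\<forall>w\<in>Wx G z. w \<noteq> 0 \<longrightarrow> w \<bullet> x \<noteq> 0" and y: "\<forall>w\<in>Wy G z. w \<noteq> 0 \<longrightarrow> w \<bullet> y \<noteq> 0" for x y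
    proof -
      have xp: "x \<in> principal G" using x by (intro avoidR[OF G]) (auto simp: Wx_def)
      have yp: "y \<in> principal G" using y by (intro avoidR[OF G]) (auto simp: Wy_def)
      show ?thesis
        by (rule core[OF G big zf _ cc zdet xp yp xcond[OF G x] ycond[OF G y zf]])
          (use c0 in auto)
    qed
    have lower: "c * qdist G x y \<le> norm (max_filter G z x - max_filter G z y)" for x y
    proof (rule field_le_epsilon)
      fix e :: real assume e: "e > 0"
      define d where "d = e / (2*c + 2*b0 + 1)"
      have den: "2*c + 2*b0 + 1 > 0" using c0 b0 by simp
      have d: "d > 0" unfolding d_def using e den by simp
      have de: "d * (2*c + 2*b0 + 1) = e" unfolding d_def using den by simp
      obtain x' where x': "dist x' x < d" "\<forall>w\<in>Wx G z. w \<noteq> 0 \<longrightarrow> w \<bullet> x' \<noteq> 0"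
        using dense_avoid[OF Wx_fin[OF G] d] by blast
      obtain y' where y': "dist y' y < d" "\<forall>w\<in>Wy G z. w \<noteq> 0 \<longrightarrow> w \<bullet> y' \<noteq> 0"
        using dense_avoid[OF Wy_fin[OF G] d] by blast
      let ?F = "max_filter G z"
      have 1: "c * qdist G x' y' \<le> norm (?F x' - ?F y')" by (rule good[OF x'(2) y'(2)])
      have 2: "qdist G x y \<le> qdist G x' y' + norm (x - x') + norm (y - y')" by (rule qdist_tri[OF G])
      have nx: "norm (x - x') < d" "norm (x' - x) < d" using x'(1) by (simp_all add: dist_norm norm_minus_commute)
      have ny: "norm (y - y') < d" "norm (y' - y) < d" using y'(1) by (simp_all add: dist_norm norm_minus_commute)
      have 3: "norm (?F x' - ?F y') \<le> norm (?F x - ?F y) + norm (?F x' - ?F x) + norm (?F y' - ?F y)"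
      proof -
        have "?F x' - ?F y' = (?F x - ?F y) + (?F x' - ?F x) - (?F y' - ?F y)" by simp
        then show ?thesis by (smt (verit) norm_triangle_ineq norm_triangle_ineq4)
      qed
      have 4: "norm (?F x' - ?F x) \<le> b0 * d" "norm (?F y' - ?F y) \<le> b0 * d"
        using upper2[of x' x] upper2[of y' y] mult_left_mono[OF less_imp_le[OF nx(2)] b0]
          mult_left_mono[OF less_imp_le[OF ny(2)] b0] by linarith+
      have 5: "c * qdist G x y \<le> c * qdist G x' y' + c * norm (x - x') + c * norm (y - y')"
        using mult_left_mono[OF 2 less_imp_le[OF c0]] by (simp add: algebra_simps)
      have 6: "c * norm (x - x') \<le> c * d" "c * norm (y - y') \<le> c * d"
        using mult_left_mono[OF less_imp_le[OF nx(1)] less_imp_le[OF c0]]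
          mult_left_mono[OF less_imp_le[OF ny(1)] less_imp_le[OF c0]] by auto
      have 7: "2 * c * d + 2 * b0 * d \<le> e" using de d by (simp add: algebra_simps)
      show "c * qdist G x y \<le> norm (?F x - ?F y) + e" using 1 3 4 5 6 7 by linarith
    qed
    show ?thesis unfolding bilipschitz_mf_def
    proof (intro exI conjI allI)
      show "0 < c" by (rule c0)
      show "c \<le> max c b0" by simp
      fix x y
      show "c * qdist G x y \<le> norm (max_filter G z x - max_filter G z y)" by (rule lower)
      show "norm (max_filter G z x - max_filter G z y) \<le> max c b0 * qdist G x y"
        using upper[of x y] mult_right_mono[OF max.cobounded2[of b0 c] qdist_nonneg[OF G, of x y]] by linarith
    qed
  qed
  show ?thesis unfolding generic_def using PP_ok[OF G] bl by blast
qed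

end
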